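(* Let $r\ge1$ be an integer and for $i=0,1,\dots,2r$ let $$G_{i,r}=\big((2r+1)K_1\big)\nabla\Big(\big((2r+1-i)K_1\big)\cup\big(K_1\nabla(i+1)K_1\big)\Big),$$ each of order $4r+4$. Then for every $i$, $LE(G_{i,r})=LE(K_{4r+4})=8r+6$ (so each $G_{i,r}$ is $L$-borderenergetic), and the $2r+1$ graphs $G_{0,r},\dots,G_{2r,r}$ have pairwise distinct Laplacian spectra, none equal to the Laplacian spectrum of $K_{4r+4}$.
   Context: All graphs are finite, simple and undirected. The Laplacian matrix of $G$ is $L(G)=D-A$ ($D$ degree matrix, $A$ adjacency matrix). For a graph $G$ on $n$ vertices with Laplacian eigenvalues $\mu_1,\dots,\mu_n$ and average degree $\overline d = 2|E(G)|/n$, the Laplacian energy is $LE(G)=\sum_{i=1}^n|\mu_i-\overline d|$. One has $LE(K_n)=2n-2$. A graph $G$ on $n$ vertices is $L$-borderenergetic if $LE(G)=LE(K_n)$. $K_m$ is the complete graph on $m$ vertices, $mG$ is the disjoint union of $m$ copies of $G$ ($0K_1$ is the empty graph), $\cup$ is disjoint union, and the join $G_1\nabla G_2$ is obtained from $G_1\cup G_2$ by adding all edges between a vertex of $G_1$ and a vertex of $G_2$. *)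

theory Defs
  imports "Jordan_Normal_Form.Char_Poly"
begin

text \<open>A finite simple graph is represented as a pair (n, adj): the vertex set is {0..<n}
  and adj is the (symmetric, irreflexive) adjacency relation, only relevant on {0..<n}.\<close>

type_synonym graph = "nat \<times> (nat \<Rightarrow> nat \<Rightarrow> bool)"

definition order :: "graph \<Rightarrow> nat" where
  "order G = fst G"

definition adj :: "graph \<Rightarrow> nat \<Rightarrow> nat \<Rightarrow> bool" where
  "adj G = snd G"

definition empty_graph :: "nat \<Rightarrow> graph" where
  "empty_graph m = (m, (\<lambda>_ _. False))"

definition complete_graph :: "nat \<Rightarrow> graph" where
  "complete_graph m = (m, (\<lambda>i j. i \<noteq> j))"

definition gunion :: "graph \<Rightarrow> graph \<Rightarrow> graph" where
  "gunion G1 G2 = (order G1 + order G2,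
     (\<lambda>i j. if i < order G1 \<and> j < order G1 then adj G1 i j
            else if order G1 \<le> i \<and> order G1 \<le> j then adj G2 (i - order G1) (j - order G1)
            else False))"

definition gjoin :: "graph \<Rightarrow> graph \<Rightarrow> graph" where
  "gjoin G1 G2 = (order G1 + order G2,
     (\<lambda>i j. if i < order G1 \<and> j < order G1 then adj G1 i j
            else if order G1 \<le> i \<and> order G1 \<le> j then adj G2 (i - order G1) (j - order G1)
            else True))"

definition degree :: "graph \<Rightarrow> nat \<Rightarrow> nat" where
  "degree G i = card {k. k < order G \<and> adj G i k}"

definition num_edges :: "graph \<Rightarrow> nat" where
  "num_edges G = card {(i, j). i < j \<and> j < order G \<and> adj G i j}"

definition laplacian :: "graph \<Rightarrow> real mat" where
  "laplacian G = mat (order G) (order G)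
     (\<lambda>(i, j). (if i = j then real (degree G i) else 0) - (if adj G i j then 1 else 0))"

text \<open>Laplacian spectrum: multiset of eigenvalues (roots of the characteristic polynomial,
  with multiplicity; the Laplacian is real symmetric so all eigenvalues are real).\<close>
definition lap_spectrum :: "graph \<Rightarrow> real multiset" where
  "lap_spectrum G = proots (char_poly (laplacian G))"

definition avg_degree :: "graph \<Rightarrow> real" where
  "avg_degree G = 2 * real (num_edges G) / real (order G)"

definition lap_energy :: "graph \<Rightarrow> real" where
  "lap_energy G = (\<Sum>\<^sub># (image_mset (\<lambda>\<mu>. \<bar>\<mu> - avg_degree G\<bar>) (lap_spectrum G)))"

definition L_borderenergetic :: "graph \<Rightarrow> bool" where
  "L_borderenergetic G \<longleftrightarrow> lap_energy G = lap_energy (complete_graph (order G))"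

definition G_ir :: "nat \<Rightarrow> nat \<Rightarrow> graph" where
  "G_ir i r = gjoin (empty_graph (2*r+1))
      (gunion (empty_graph (2*r+1-i)) (gjoin (empty_graph 1) (empty_graph (i+1))))"

end

theory Submission
  imports Defs
begin

definition bsz :: "nat \<Rightarrow> (nat \<Rightarrow> nat) \<Rightarrow> nat \<Rightarrow> real" where
  "bsz n blk S = real (card {k. k < n \<and> blk k = S})"

lemma mult_mat_entry:
  assumes "i < n" "j < n"
  shows "(mat n n f * mat n n g) $$ (i,j) = (\<Sum>k<n. f (i,k) * g (k,j))"
  using assms by (simp add: scalar_prod_def atLeast0LessThan)

lemma sum_blk:
  assumes "\<And>k. k < n \<Longrightarrow> blk k < m"
  shows "(\<Sum>k<n. F (blk k)) = (\<Sum>S<m. bsz n blk S * F S)"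
proof -
  have "(\<Sum>S<m. bsz n blk S * F S) = (\<Sum>S<m. \<Sum>k<n. if blk k = S then F S else 0)"
  proof (rule sum.cong[OF refl])
    fix S
    have "(\<Sum>k<n. if blk k = S then F S else 0) = (\<Sum>k\<in>{k. k < n \<and> blk k = S}. F S)"
      by (rule sum.mono_neutral_cong_right) auto
    then show "bsz n blk S * F S = (\<Sum>k<n. if blk k = S then F S else 0)"
      by (simp add: bsz_def)
  qed
  also have "\<dots> = (\<Sum>k<n. \<Sum>S<m. if blk k = S then F S else 0)" by (rule sum.swap)
  also have "\<dots> = (\<Sum>k<n. F (blk k))"
    by (rule sum.cong[OF refl]) (use assms in \<open>simp add: eq_commute[of "blk _"]\<close>)
  finally show ?thesis by simp
qed

lemma sum_diff_delta:
  fixes f :: "nat \<Rightarrow> real"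
  assumes "a < n" "b < n"
  shows "(\<Sum>k<n. f k * ((if k = a then 1 else 0) - (if k = b then 1 else 0))) = f a - f b"
proof -
  have "(\<Sum>k<n. f k * ((if k = a then 1 else 0) - (if k = b then 1 else 0)))
      = (\<Sum>k<n. (if k = a then f k else 0) - (if k = b then f k else 0))"
    by (rule sum.cong) auto
  also have "\<dots> = f a - f b" using assms by (simp add: sum_subtractf)
  finally show ?thesis .
qed

lemma card_filter_sum:
  "real (card {k. k < (n::nat) \<and> P k}) = (\<Sum>k<n. if P k then 1 else 0)"
proof -
  have "(\<Sum>k<n. if P k then (1::real) else 0) = (\<Sum>k\<in>{k. k < n \<and> P k}. 1)"
    by (rule sum.mono_neutral_cong_right) auto
  moreover have "finite {k. k < n \<and> P k}" by simp
  ultimately show ?thesis by simp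
qed

lemma proots_lin: "proots (\<Prod>a\<leftarrow>map (f::nat\<Rightarrow>real) [0..<x]. [:- a, 1:]) = mset (map f [0..<x])"
proof (induction x)
  case 0 then show ?case by simp
next
  case (Suc x)
  have "proots (\<Prod>a\<leftarrow>map f [0..<Suc x]. [:- a, 1:]) =
    proots ((\<Prod>a\<leftarrow>map f [0..<x]. [:- a, 1:]) * [:- f x, 1:])" by simp
  also have "\<dots> = proots (\<Prod>a\<leftarrow>map f [0..<x]. [:- a, 1:]) + proots [:- f x, 1:]"
    by (rule proots_mult) (auto simp: prod_list_zero_iff)
  finally show ?case using Suc by simp
qed

lemma cnt: "real (count (mset (map (f::nat\<Rightarrow>'a) [0..<x])) v) = (\<Sum>j<x. if f j = v then 1 else 0)"
  by (induction x) auto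

definition bee :: "nat \<Rightarrow> nat \<Rightarrow> (nat \<Rightarrow> nat) \<Rightarrow> (nat \<Rightarrow> nat \<Rightarrow> bool) \<Rightarrow> nat \<Rightarrow> real" where
  "bee n m blk badj S = (\<Sum>T<m. bsz n blk T * (if badj S T then 1 else 0))"

locale bgraph =
  fixes G :: graph and m :: nat and blk rho :: "nat \<Rightarrow> nat" and badj :: "nat \<Rightarrow> nat \<Rightarrow> bool"
    and w :: "nat \<Rightarrow> nat \<Rightarrow> real" and lam N :: "nat \<Rightarrow> real"
  assumes blk_lt: "k < order G \<Longrightarrow> blk k < m"
  and rho_lt: "S < m \<Longrightarrow> rho S < order G"
  and blk_rho: "S < m \<Longrightarrow> blk (rho S) = S"
  and adj_iff: "u < order G \<Longrightarrow> v < order G \<Longrightarrow> adj G u v \<longleftrightarrow> u \<noteq> v \<and> badj (blk u) (blk v)"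
  and orth: "R < m \<Longrightarrow> C < m \<Longrightarrow> (\<Sum>S<m. bsz (order G) blk S * (w R S * w C S)) = (if R = C then N R else 0)"
  and N_nz: "R < m \<Longrightarrow> N R \<noteq> 0"
  and eig: "R < m \<Longrightarrow> S < m \<Longrightarrow> bee (order G) m blk badj S * w R S
      - (\<Sum>T<m. bsz (order G) blk T * (if badj S T then w R T else 0)) = lam R * w R S"
begin

abbreviation "nn \<equiv> order G"
abbreviation "sz \<equiv> bsz nn blk"
abbreviation "ee \<equiv> bee nn m blk badj"

lemma sumB: "(\<Sum>k<nn. F (blk k)) = (\<Sum>S<m. sz S * F S)"
  by (rule sum_blk) (rule blk_lt)

lemma sz_pos: "S < m \<Longrightarrow> sz S > 0"
proof -
  assume S: "S < m"
  have "rho S \<in> {k. k < nn \<and> blk k = S}" using rho_lt[OF S] blk_rho[OF S] by auto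
  then have "card {k. k < nn \<and> blk k = S} > 0" by (subst card_gt_0_iff) auto
  then show ?thesis by (simp add: bsz_def)
qed

lemma deg: assumes u: "u < nn"
  shows "real (degree G u) = ee (blk u) - (if badj (blk u) (blk u) then 1 else 0)"
proof -
  let ?S = "blk u"
  have "{k. k < nn \<and> adj G u k} = {k. k < nn \<and> (k \<noteq> u \<and> badj ?S (blk k))}"
    using adj_iff u by auto
  then have "real (degree G u) = (\<Sum>k<nn. if k \<noteq> u \<and> badj ?S (blk k) then 1 else 0)"
    by (simp add: degree_def card_filter_sum)
  also have "\<dots> = (\<Sum>k<nn. (if badj ?S (blk k) then 1 else 0) - (if k = u then (if badj ?S ?S then 1 else 0) else 0))"
    by (rule sum.cong) auto
  also have "\<dots> = (\<Sum>k<nn. (if badj ?S (blk k) then 1 else 0)) - (if badj ?S ?S then 1 else 0)"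
    using u by (simp add: sum_subtractf)
  also have "(\<Sum>k<nn. (if badj ?S (blk k) then 1 else 0)) = ee ?S"
    unfolding bee_def by (rule sumB)
  finally show ?thesis .
qed

definition Lf :: "nat \<times> nat \<Rightarrow> real" where
  "Lf = (\<lambda>(i, j). (if i = j then real (degree G i) else 0) - (if adj G i j then 1 else 0))"

lemma lap_eq: "laplacian G = mat nn nn Lf"
  by (simp add: laplacian_def Lf_def)

lemma Lrow: assumes u: "u < nn"
  shows "(\<Sum>k<nn. Lf (u,k) * x k) = ee (blk u) * x u - (\<Sum>k<nn. (if badj (blk u) (blk k) then 1 else 0) * x k)"
proof -
  let ?S = "blk u"
  have "(\<Sum>k<nn. Lf (u,k) * x k) = (\<Sum>k<nn. (if k = u then real (degree G u) * x u else 0)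
     - ((if badj ?S (blk k) then 1 else 0) * x k - (if k = u then (if badj ?S ?S then x u else 0) else 0)))"
    by (rule sum.cong) (use u adj_iff in \<open>auto simp: Lf_def\<close>)
  also have "\<dots> = real (degree G u) * x u - ((\<Sum>k<nn. (if badj ?S (blk k) then 1 else 0) * x k) - (if badj ?S ?S then x u else 0))"
    using u by (simp add: sum_subtractf)
  finally show ?thesis using deg[OF u] by (cases "badj ?S ?S") (simp_all add: algebra_simps)
qed

definition Pf :: "nat \<times> nat \<Rightarrow> real" where
  "Pf = (\<lambda>(k,j). if j = rho (blk j) then w (blk j) (blk k)
           else (if k = j then 1 else 0) - (if k = rho (blk j) then 1 else 0))"
definition Qf :: "nat \<times> nat \<Rightarrow> real" where
  "Qf = (\<lambda>(j,k). if j = rho (blk j) then w (blk j) (blk k) / N (blk j)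
           else (if k = j then 1 else 0) - (if blk k = blk j then 1 / sz (blk j) else 0))"
definition dd :: "nat \<Rightarrow> real" where
  "dd j = (if j = rho (blk j) then lam (blk j) else ee (blk j))"
definition Df :: "nat \<times> nat \<Rightarrow> real" where
  "Df = (\<lambda>(i,j). if i = j then dd j else 0)"

lemma QP: assumes rw: "rw < nn" and cl: "cl < nn"
  shows "(\<Sum>k<nn. Qf (rw,k) * Pf (k,cl)) = (if rw = cl then 1 else 0)"
proof (cases "cl = rho (blk cl)")
  case False
  let ?T = "blk cl"
  have T: "?T < m" using blk_lt cl by auto
  have "(\<Sum>k<nn. Qf (rw,k) * Pf (k,cl)) = (\<Sum>k<nn. Qf (rw,k) * ((if k = cl then 1 else 0) - (if k = rho ?T then 1 else 0)))"
    by (rule sum.cong) (use False in \<open>auto simp: Pf_def\<close>)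
  also have "\<dots> = Qf (rw, cl) - Qf (rw, rho ?T)"
    by (rule sum_diff_delta) (use cl rho_lt T in auto)
  also have "\<dots> = (if rw = cl then 1 else 0)"
  proof (cases "rw = rho (blk rw)")
    case True
    then show ?thesis using False blk_rho[OF T] by (auto simp: Qf_def)
  next
    case F2: False
    have "rho ?T \<noteq> rw" using F2 blk_rho[OF T] by auto
    then show ?thesis using F2 blk_rho[OF T] by (auto simp: Qf_def)
  qed
  finally show ?thesis .
next
  case True
  let ?C = "blk cl"
  have C: "?C < m" using blk_lt cl by auto
  have "(\<Sum>k<nn. Qf (rw,k) * Pf (k,cl)) = (\<Sum>k<nn. Qf (rw,k) * w ?C (blk k))"
    by (rule sum.cong) (use True in \<open>auto simp: Pf_def\<close>)
  also have "\<dots> = (if rw = cl then 1 else 0)"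
  proof (cases "rw = rho (blk rw)")
    case T2: True
    let ?R = "blk rw"
    have R: "?R < m" using blk_lt rw by auto
    have "(\<Sum>k<nn. Qf (rw,k) * w ?C (blk k)) = (\<Sum>k<nn. (\<lambda>S. w ?R S / N ?R * w ?C S) (blk k))"
      by (rule sum.cong) (use T2 in \<open>auto simp: Qf_def\<close>)
    also have "\<dots> = (\<Sum>S<m. sz S * (w ?R S / N ?R * w ?C S))" by (rule sumB)
    also have "\<dots> = (\<Sum>S<m. sz S * (w ?R S * w ?C S)) / N ?R"
      by (simp add: sum_divide_distrib)
    also have "\<dots> = (if ?R = ?C then 1 else 0)" using orth[OF R C] N_nz[OF R] by (cases "?R = ?C") auto
    also have "\<dots> = (if rw = cl then 1 else 0)" using T2 True by metis
    finally show ?thesis .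
  next
    case F2: False
    let ?S = "blk rw"
    have S: "?S < m" using blk_lt rw by auto
    have "(\<Sum>k<nn. Qf (rw,k) * w ?C (blk k)) = (\<Sum>k<nn. (if k = rw then w ?C (blk k) else 0) -
          (\<lambda>T. (if T = ?S then 1 / sz ?S else 0) * w ?C T) (blk k))"
      by (rule sum.cong) (use F2 in \<open>auto simp: Qf_def algebra_simps\<close>)
    also have "\<dots> = w ?C ?S - (\<Sum>k<nn. (\<lambda>T. (if T = ?S then 1 / sz ?S else 0) * w ?C T) (blk k))"
      using rw by (simp add: sum_subtractf)
    also have "(\<Sum>k<nn. (\<lambda>T. (if T = ?S then 1 / sz ?S else 0) * w ?C T) (blk k))
        = (\<Sum>T<m. sz T * ((if T = ?S then 1 / sz ?S else 0) * w ?C T))" by (rule sumB)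
    also have "\<dots> = (\<Sum>T<m. if T = ?S then w ?C ?S else 0)"
      by (rule sum.cong) (use sz_pos[OF S] in auto)
    also have "\<dots> = w ?C ?S" using S by simp
    finally show ?thesis using F2 True by auto
  qed
  finally show ?thesis .
qed

lemma LP: assumes u: "u < nn" and j: "j < nn"
  shows "(\<Sum>k<nn. Lf (u,k) * Pf (k,j)) = Pf (u,j) * dd j"
proof -
  let ?S = "blk u"
  have S: "?S < m" using blk_lt u by auto
  have "(\<Sum>k<nn. Lf (u,k) * Pf (k,j)) = ee ?S * Pf (u,j) - (\<Sum>k<nn. (if badj ?S (blk k) then 1 else 0) * Pf (k,j))"
    by (rule Lrow[OF u])
  also have "\<dots> = Pf (u,j) * dd j"
  proof (cases "j = rho (blk j)")
    case True
    let ?C = "blk j"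
    have C: "?C < m" using blk_lt j by auto
    have "(\<Sum>k<nn. (if badj ?S (blk k) then 1 else 0) * Pf (k,j)) = (\<Sum>k<nn. (\<lambda>T. if badj ?S T then w ?C T else 0) (blk k))"
      by (rule sum.cong) (use True in \<open>auto simp: Pf_def\<close>)
    also have "\<dots> = (\<Sum>T<m. sz T * (if badj ?S T then w ?C T else 0))" by (rule sumB)
    finally have "ee ?S * Pf (u,j) - (\<Sum>k<nn. (if badj ?S (blk k) then 1 else 0) * Pf (k,j)) = lam ?C * w ?C ?S"
      using eig[OF C S] True by (simp add: Pf_def)
    then show ?thesis using True by (simp add: Pf_def dd_def)
  next
    case False
    let ?T = "blk j"
    have T: "?T < m" using blk_lt j by auto
    have "(\<Sum>k<nn. (if badj ?S (blk k) then 1 else 0) * Pf (k,j)) =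
       (\<Sum>k<nn. (if badj ?S (blk k) then 1 else 0) * ((if k = j then 1 else 0) - (if k = rho ?T then 1 else 0)))"
      by (rule sum.cong) (use False in \<open>auto simp: Pf_def\<close>)
    also have "\<dots> = 0" using sum_diff_delta[of j nn "rho ?T" "\<lambda>k. if badj ?S (blk k) then 1 else 0"]
      j rho_lt[OF T] blk_rho[OF T] by simp
    finally have z: "(\<Sum>k<nn. (if badj ?S (blk k) then 1 else 0) * Pf (k,j)) = 0" .
    have "Pf (u,j) \<noteq> 0 \<Longrightarrow> ?S = ?T" using False blk_rho[OF T] by (auto simp: Pf_def split: if_splits)
    then show ?thesis using z False by (cases "Pf (u,j) = 0") (auto simp: dd_def)
  qed
  finally show ?thesis .
qed

lemma PD: assumes u: "u < nn" and j: "j < nn"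
  shows "(\<Sum>k<nn. Pf (u,k) * Df (k,j)) = Pf (u,j) * dd j"
proof -
  have "(\<Sum>k<nn. Pf (u,k) * Df (k,j)) = (\<Sum>k<nn. if k = j then Pf (u,j) * dd j else 0)"
    by (rule sum.cong) (auto simp: Df_def)
  then show ?thesis using j by simp
qed

lemma spectrum: "lap_spectrum G = mset (map dd [0..<nn])"
proof -
  define L where "L = mat nn nn Lf"
  define P where "P = mat nn nn Pf"
  define Q where "Q = mat nn nn Qf"
  define D where "D = mat nn nn Df"
  have car: "L \<in> carrier_mat nn nn" "P \<in> carrier_mat nn nn" "Q \<in> carrier_mat nn nn" "D \<in> carrier_mat nn nn"
    by (auto simp: L_def P_def Q_def D_def)
  have QP1: "Q * P = 1\<^sub>m nn"
    by (rule eq_matI) (auto simp: Q_def P_def mult_mat_entry QP simp del: index_mult_mat(1))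
  have PQ1: "P * Q = 1\<^sub>m nn" by (rule mat_mult_left_right_inverse[OF car(3) car(2) QP1])
  have LPD: "L * P = P * D"
    by (rule eq_matI) (auto simp: L_def P_def D_def mult_mat_entry LP PD simp del: index_mult_mat(1))
  have "L = L * (P * Q)" using car PQ1 by simp
  also have "\<dots> = (L * P) * Q" using car by (simp add: assoc_mult_mat)
  also have "\<dots> = P * D * Q" using LPD by simp
  finally have e: "L = P * D * Q" .
  have "similar_mat L D" by (rule similar_matI[OF _ PQ1 QP1 e]) (use car in auto)
  then have "char_poly L = char_poly D" by (rule char_poly_similar)
  also have "\<dots> = (\<Prod>a\<leftarrow>diag_mat D. [:- a, 1:])"
    by (rule char_poly_upper_triangular[OF car(4)]) (auto simp: upper_triangular_def D_def Df_def)
  finally have cp: "char_poly L = (\<Prod>a\<leftarrow>diag_mat D. [:- a, 1:])" .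
  have dg: "diag_mat D = map dd [0..<nn]"
    by (rule nth_equalityI) (auto simp: diag_mat_def D_def Df_def)
  have "proots (\<Prod>a\<leftarrow>map dd [0..<nn]. [:- a, 1:]) = mset (map dd [0..<nn])"
    by (rule proots_lin)
  then show ?thesis unfolding lap_spectrum_def lap_eq L_def[symmetric] cp dg .
qed

lemma rho_inj: "inj_on rho {..<m}"
  by (rule inj_onI) (metis blk_rho lessThan_iff)

lemma reps: "{j. j < nn \<and> j = rho (blk j)} = rho ` {..<m}"
proof
  show "{j. j < nn \<and> j = rho (blk j)} \<subseteq> rho ` {..<m}"
    using blk_lt by auto
  show "rho ` {..<m} \<subseteq> {j. j < nn \<and> j = rho (blk j)}"
    using rho_lt blk_rho by auto
qed

lemma sum_dd: "(\<Sum>j<nn. g (dd j)) = (\<Sum>S<m. g (lam S) + (sz S - 1) * g (ee S))"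
proof -
  have "(\<Sum>j<nn. g (dd j)) = (\<Sum>j<nn. g (ee (blk j)) + (if j = rho (blk j) then g (lam (blk j)) - g (ee (blk j)) else 0))"
    by (rule sum.cong) (auto simp: dd_def)
  also have "\<dots> = (\<Sum>j<nn. g (ee (blk j))) + (\<Sum>j\<in>{j. j < nn \<and> j = rho (blk j)}. g (lam (blk j)) - g (ee (blk j)))"
  proof -
    have "(\<Sum>j<nn. if j = rho (blk j) then g (lam (blk j)) - g (ee (blk j)) else 0)
        = (\<Sum>j\<in>{j. j < nn \<and> j = rho (blk j)}. g (lam (blk j)) - g (ee (blk j)))"
      by (rule sum.mono_neutral_cong_right) auto
    then show ?thesis by (simp add: sum.distrib)
  qed
  also have "(\<Sum>j\<in>{j. j < nn \<and> j = rho (blk j)}. g (lam (blk j)) - g (ee (blk j))) = (\<Sum>S<m. g (lam S) - g (ee S))"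
    unfolding reps by (subst sum.reindex[OF rho_inj]) (auto simp: blk_rho intro!: sum.cong)
  also have "(\<Sum>j<nn. g (ee (blk j))) = (\<Sum>S<m. sz S * g (ee S))" by (rule sumB)
  finally show ?thesis by (simp add: sum.distrib[symmetric] algebra_simps)
qed

lemma count_spec: "real (count (lap_spectrum G) v) = (\<Sum>S<m. (if lam S = v then 1 else 0) + (sz S - 1) * (if ee S = v then 1 else 0))"
proof -
  have "real (count (lap_spectrum G) v) = (\<Sum>j<nn. (\<lambda>x. if x = v then 1 else 0) (dd j))"
    unfolding spectrum cnt by simp
  also have "\<dots> = (\<Sum>S<m. (\<lambda>x. if x = v then 1 else 0) (lam S) + (sz S - 1) * (\<lambda>x. if x = v then 1 else 0) (ee S))" by (rule sum_dd)
  finally show ?thesis by simp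
qed

lemma energy_sum: "lap_energy G = (\<Sum>S<m. \<bar>lam S - avg_degree G\<bar> + (sz S - 1) * \<bar>ee S - avg_degree G\<bar>)"
proof -
  have "lap_energy G = (\<Sum>j<nn. (\<lambda>x. \<bar>x - avg_degree G\<bar>) (dd j))"
  proof -
    have "mset (map dd [0..<nn]) = image_mset dd (mset_set {..<nn})"
      by (simp add: atLeast0LessThan)
    then show ?thesis unfolding lap_energy_def spectrum
      by (simp add: image_mset.compositionality sum_unfold_sum_mset o_def)
  qed
  also have "\<dots> = (\<Sum>S<m. (\<lambda>x. \<bar>x - avg_degree G\<bar>) (lam S) + (sz S - 1) * (\<lambda>x. \<bar>x - avg_degree G\<bar>) (ee S))" by (rule sum_dd)
  finally show ?thesis by simp
qed

lemma deg_sum: "(\<Sum>u<nn. real (degree G u)) = (\<Sum>S<m. sz S * (ee S - (if badj S S then 1 else 0)))"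
proof -
  have "(\<Sum>u<nn. real (degree G u)) = (\<Sum>u<nn. (\<lambda>S. ee S - (if badj S S then 1 else 0)) (blk u))"
    by (rule sum.cong) (auto simp: deg)
  also have "\<dots> = (\<Sum>S<m. sz S * (\<lambda>S. ee S - (if badj S S then 1 else 0)) S)" by (rule sumB)
  finally show ?thesis by simp
qed

end

lemma handshake:
  assumes sym: "\<And>u v. u < order G \<Longrightarrow> v < order G \<Longrightarrow> adj G u v = adj G v u"
    and irr: "\<And>u. u < order G \<Longrightarrow> \<not> adj G u u"
  shows "2 * num_edges G = (\<Sum>u<order G. degree G u)"
proof -
  let ?n = "order G"
  define E where "E = {(i, j). i < j \<and> j < ?n \<and> adj G i j}"
  define E2 where "E2 = {(u, k). u < ?n \<and> k < ?n \<and> adj G u k}"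
  have fE: "finite E" unfolding E_def
    by (rule finite_subset[of _ "{..<?n} \<times> {..<?n}"]) auto
  have E2: "E2 = E \<union> prod.swap ` E"
  proof
    show "E2 \<subseteq> E \<union> prod.swap ` E"
    proof
      fix x assume "x \<in> E2"
      then obtain u k where x: "x = (u,k)" "u < ?n" "k < ?n" "adj G u k" unfolding E2_def by auto
      then have "u \<noteq> k" using irr by auto
      show "x \<in> E \<union> prod.swap ` E"
      proof (cases "u < k")
        case True then show ?thesis using x unfolding E_def by auto
      next
        case False
        then have "(k,u) \<in> E" using x \<open>u \<noteq> k\<close> sym unfolding E_def by auto
        then show ?thesis using x by (auto intro: image_eqI[of _ _ "(k,u)"])
      qed
    qed
    show "E \<union> prod.swap ` E \<subseteq> E2" unfolding E_def E2_def using sym by auto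
  qed
  have disj: "E \<inter> prod.swap ` E = {}" unfolding E_def by auto
  have "card E2 = card E + card (prod.swap ` E)"
    unfolding E2 by (rule card_Un_disjoint) (use fE disj in auto)
  also have "card (prod.swap ` E) = card E" by (rule card_image) simp
  finally have c1: "card E2 = 2 * card E" by simp
  have "E2 = Sigma {..<?n} (\<lambda>u. {k. k < ?n \<and> adj G u k})" unfolding E2_def by auto
  then have "card E2 = (\<Sum>u<?n. card {k. k < ?n \<and> adj G u k})" by (simp add: card_SigmaI)
  then show ?thesis using c1 by (simp add: num_edges_def E_def degree_def)
qed


lemma avg_from_handshake:
  assumes sym: "\<And>u v. u < order G \<Longrightarrow> v < order G \<Longrightarrow> adj G u v = adj G v u"
    and irr: "\<And>u. u < order G \<Longrightarrow> \<not> adj G u u"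
  shows "avg_degree G = (\<Sum>u<order G. real (degree G u)) / real (order G)"
proof -
  have "real (2 * num_edges G) = real (\<Sum>u<order G. degree G u)" using handshake[OF sym irr] by metis
  then show ?thesis unfolding avg_degree_def by simp
qed

lemma bsz_all: "bsz n (\<lambda>_. 0) 0 = real n"
  by (simp add: bsz_def)

lemma K_bg: assumes "n \<ge> 1"
  shows "bgraph (complete_graph n) 1 (\<lambda>_. 0) (\<lambda>_. 0) (\<lambda>_ _. True) (\<lambda>_ _. 1) (\<lambda>_. 0) (\<lambda>_. real n)"
  using assms by unfold_locales (auto simp: complete_graph_def order_def adj_def bsz_def bee_def)

lemma K_facts: assumes n: "n \<ge> 1"
  shows "lap_energy (complete_graph n) = 2 * real n - 2"
    and "real (count (lap_spectrum (complete_graph n)) (real n)) = real n - 1"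
proof -
  interpret bgraph "complete_graph n" 1 "\<lambda>_. 0" "\<lambda>_. 0" "\<lambda>_ _. True" "\<lambda>_ _. 1" "\<lambda>_. 0" "\<lambda>_. real n"
    by (rule K_bg[OF n])
  have on: "order (complete_graph n) = n" by (simp add: complete_graph_def order_def)
  have ee0: "bee n (Suc 0) (\<lambda>_. 0) (\<lambda>_ _. True) 0 = real n" by (simp add: bee_def bsz_def)
  have "avg_degree (complete_graph n) = (\<Sum>u<order (complete_graph n). real (degree (complete_graph n) u)) / real (order (complete_graph n))"
    by (rule avg_from_handshake) (auto simp: complete_graph_def adj_def order_def)
  then have "avg_degree (complete_graph n) = (\<Sum>u<n. real (degree (complete_graph n) u)) / real n"
    by (simp only: on)
  also have "(\<Sum>u<n. real (degree (complete_graph n) u)) = real n * (real n - 1)"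
    using deg_sum by (simp add: on ee0 bsz_all)
  finally have avg: "avg_degree (complete_graph n) = real n - 1" using n by simp
  show "lap_energy (complete_graph n) = 2 * real n - 2"
    using energy_sum n by (simp add: on ee0 bsz_all avg)
  show "real (count (lap_spectrum (complete_graph n)) (real n)) = real n - 1"
    using count_spec n by (simp add: on ee0 bsz_all)
qed


definition blkG :: "nat \<Rightarrow> nat \<Rightarrow> nat \<Rightarrow> nat" where
  "blkG r i k = (if k < 2*r+1 then 0 else if k < 4*r+2-i then 1 else if k = 4*r+2-i then 2 else 3)"
definition rhoG :: "nat \<Rightarrow> nat \<Rightarrow> nat \<Rightarrow> nat" where
  "rhoG r i S = (if S = 0 then 0 else if S = 1 then 2*r+1 else if S = 2 then 4*r+2-i else 4*r+3-i)"
definition badjG :: "nat \<Rightarrow> nat \<Rightarrow> bool" where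
  "badjG S T = ((S = 0 \<and> T \<noteq> 0) \<or> (T = 0 \<and> S \<noteq> 0) \<or> (S = 2 \<and> T = 3) \<or> (S = 3 \<and> T = 2))"
definition wG :: "nat \<Rightarrow> nat \<Rightarrow> nat \<Rightarrow> nat \<Rightarrow> real" where
  "wG r i R S = [[1,1,1,1],
     [2*real r+3, -(2*real r+1), -(2*real r+1), -(2*real r+1)],
     [0,0,real i+1,-1],
     [0, real i+2, -(2*real r+1-real i), -(2*real r+1-real i)]] ! R ! S"
definition lamG :: "nat \<Rightarrow> nat \<Rightarrow> nat \<Rightarrow> real" where
  "lamG r i R = [0, 4*real r+4, 2*real r+3+real i, 2*real r+1] ! R"
definition NG :: "nat \<Rightarrow> nat \<Rightarrow> nat \<Rightarrow> real" where
  "NG r i R = [4*real r+4, (2*real r+1)*(2*real r+3)*(4*real r+4), (real i+1)*(real i+2),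
     (2*real r+1-real i)*(real i+2)*(2*real r+3)] ! R"
definition szG :: "nat \<Rightarrow> nat \<Rightarrow> nat \<Rightarrow> real" where
  "szG r i S = [2*real r+1, 2*real r+1-real i, 1, real i+1] ! S"

lemma less4: "(R::nat) < 4 \<Longrightarrow> R = 0 \<or> R = 1 \<or> R = 2 \<or> R = 3" by auto

lemma sum4: "(\<Sum>S<(4::nat). f S) = f 0 + f 1 + f 2 + f 3"
  by (simp add: eval_nat_numeral)

lemma order_G: "i \<le> 2*r \<Longrightarrow> order (G_ir i r) = 4*r+4"
  by (simp add: G_ir_def gjoin_def gunion_def empty_graph_def order_def)

lemma adj_G_unf: "adj (G_ir i r) u v = (if u < 2*r+1 \<and> v < 2*r+1 then False
   else if 2*r+1 \<le> u \<and> 2*r+1 \<le> v then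
     (if u - (2*r+1) < 2*r+1-i \<and> v - (2*r+1) < 2*r+1-i then False
      else if 2*r+1-i \<le> u - (2*r+1) \<and> 2*r+1-i \<le> v - (2*r+1) then
        (if u - (2*r+1) - (2*r+1-i) < 1 \<and> v - (2*r+1) - (2*r+1-i) < 1 then False
         else if 1 \<le> u - (2*r+1) - (2*r+1-i) \<and> 1 \<le> v - (2*r+1) - (2*r+1-i) then False else True)
      else False)
   else True)"
  by (simp add: G_ir_def gjoin_def gunion_def empty_graph_def order_def adj_def)
lemma blocks: assumes i: "i \<le> 2*r" and u: "u < 4*r+4"
  defines "a \<equiv> 2*r+1" and "b \<equiv> 2*r+1-i"
  shows "(u < a \<and> blkG r i u = 0) \<or>
         (\<not> u < a \<and> a \<le> u \<and> u - a < b \<and> \<not> b \<le> u - a \<and> blkG r i u = 1) \<or>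
         (\<not> u < a \<and> a \<le> u \<and> \<not> u - a < b \<and> b \<le> u - a \<and> u - a - b < 1 \<and> \<not> 1 \<le> u - a - b \<and> u = 4*r+2-i \<and> blkG r i u = 2) \<or>
         (\<not> u < a \<and> a \<le> u \<and> \<not> u - a < b \<and> b \<le> u - a \<and> \<not> u - a - b < 1 \<and> 1 \<le> u - a - b \<and> blkG r i u = 3)"
  using i u unfolding a_def b_def blkG_def by auto

lemma adj_G: assumes i: "i \<le> 2*r" and u: "u < 4*r+4" and v: "v < 4*r+4"
  shows "adj (G_ir i r) u v \<longleftrightarrow> u \<noteq> v \<and> badjG (blkG r i u) (blkG r i v)"
  using blocks[OF i u] blocks[OF i v] unfolding adj_G_unf
  by (elim disjE conjE) (simp_all only: if_True if_False badjG_def simp_thms, auto)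

lemma sz_G: assumes i: "i \<le> 2*r" and S: "S < 4"
  shows "bsz (4*r+4) (blkG r i) S = szG r i S"
proof -
  have "S = 0 \<or> S = 1 \<or> S = 2 \<or> S = 3" using S by auto
  moreover have "{k. k < 4*r+4 \<and> blkG r i k = 0} = {0..<2*r+1}" using i by (auto simp: blkG_def)
  moreover have "{k. k < 4*r+4 \<and> blkG r i k = 1} = {2*r+1..<4*r+2-i}" using i by (auto simp: blkG_def)
  moreover have "{k. k < 4*r+4 \<and> blkG r i k = 2} = {4*r+2-i}" using i by (auto simp: blkG_def)
  moreover have "{k. k < 4*r+4 \<and> blkG r i k = 3} = {4*r+3-i..<4*r+4}" using i by (auto simp: blkG_def)
  ultimately show ?thesis using i by (auto simp: bsz_def szG_def of_nat_diff)
qed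

lemma orthG: assumes "R < 4" "C < 4"
  shows "(\<Sum>S<4. szG r i S * (wG r i R S * wG r i C S)) = (if R = C then NG r i R else 0)"
  using less4[OF assms(1)] less4[OF assms(2)]
  by (elim disjE) (simp_all add: sum4 wG_def szG_def NG_def algebra_simps)

lemma eigG: assumes "R < 4" "S < 4"
  shows "(\<Sum>T<4. szG r i T * (if badjG S T then 1 else 0)) * wG r i R S
     - (\<Sum>T<4. szG r i T * (if badjG S T then wG r i R T else 0)) = lamG r i R * wG r i R S"
  using less4[OF assms(1)] less4[OF assms(2)]
  by (elim disjE) (simp_all add: sum4 wG_def szG_def lamG_def badjG_def algebra_simps)

lemma sumsz: assumes i: "i \<le> 2*r" shows "(\<Sum>T<4. bsz (4*r+4) (blkG r i) T * f T) = (\<Sum>T<4. szG r i T * f T)"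
  by (rule sum.cong) (simp_all add: sz_G[OF i])

lemma G_bg: assumes i: "i \<le> 2*r"
  shows "bgraph (G_ir i r) 4 (blkG r i) (rhoG r i) badjG (wG r i) (lamG r i) (NG r i)"
proof (unfold_locales, goal_cases)
  case (1 k) then show ?case by (simp add: order_G[OF i] blkG_def)
next
  case (2 S) then show ?case using i less4[OF 2] by (elim disjE) (simp_all add: order_G[OF i] rhoG_def)
next
  case (3 S)
  have "\<not> 4*r+3-i < 2*r+1" "\<not> 4*r+3-i < 4*r+2-i" "4*r+3-i \<noteq> 4*r+2-i" "\<not> 4*r+2-i < 4*r+2-i"
     "\<not> 4*r+2-i < 2*r+1" "2*r+1 < 4*r+2-i" using i by auto
  then show ?case using less4[OF 3] by (elim disjE) (simp_all only: blkG_def rhoG_def if_True if_False simp_thms, simp_all)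
next
  case (4 u v) then show ?case using adj_G[OF i] by (simp add: order_G[OF i])
next
  case (5 R C)
  then show ?case unfolding order_G[OF i] sumsz[OF i] by (rule orthG)
next
  case (6 R)
  have "real i \<le> 2 * real r" using i by simp
  then show ?case using less4[OF 6] by (elim disjE) (simp_all add: NG_def)
next
  case (7 R S)
  then show ?case unfolding order_G[OF i] bee_def sumsz[OF i] by (rule eigG)
qed


lemma eeG: assumes i: "i \<le> 2*r" and S: "S < 4"
  shows "bee (order (G_ir i r)) 4 (blkG r i) badjG S = [2*real r+3, 2*real r+1, 2*real r+2+real i, 2*real r+2] ! S"
  unfolding order_G[OF i] bee_def sumsz[OF i]
  using less4[OF S] by (elim disjE) (simp_all add: sum4 szG_def badjG_def)

lemma G_facts: assumes i: "i \<le> 2*r"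
  shows "lap_energy (G_ir i r) = 8 * real r + 6"
    and "real (count (lap_spectrum (G_ir i r)) (2 * real r + 2)) = real i"
    and "real (count (lap_spectrum (G_ir i r)) (4 * real r + 4)) = 1"
proof -
  interpret bgraph "G_ir i r" 4 "blkG r i" "rhoG r i" badjG "wG r i" "lamG r i" "NG r i"
    by (rule G_bg[OF i])
  have I: "real i \<le> 2 * real r" using i by simp
  have szeq: "\<And>S. S < 4 \<Longrightarrow> bsz (order (G_ir i r)) (blkG r i) S = szG r i S"
    using sz_G[OF i] by (simp add: order_G[OF i])
  have ee: "\<And>S. S < 4 \<Longrightarrow> bee (order (G_ir i r)) 4 (blkG r i) badjG S = [2*real r+3, 2*real r+1, 2*real r+2+real i, 2*real r+2] ! S"
    by (rule eeG[OF i])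
  have "avg_degree (G_ir i r) = (\<Sum>u<order (G_ir i r). real (degree (G_ir i r) u)) / real (order (G_ir i r))"
    by (rule avg_from_handshake) (auto simp: order_G[OF i] adj_G[OF i] badjG_def)
  also have "(\<Sum>u<order (G_ir i r). real (degree (G_ir i r) u)) = (\<Sum>S<4. szG r i S * ([2*real r+3, 2*real r+1, 2*real r+2+real i, 2*real r+2] ! S))"
    unfolding deg_sum by (rule sum.cong) (simp_all add: szeq ee badjG_def)
  finally have avg: "avg_degree (G_ir i r) = (8 * real r ^ 2 + 16 * real r + 8 + 2 * real i) / (4 * real r + 4)"
    by (simp add: order_G[OF i] sum4 szG_def algebra_simps power2_eq_square)
  define t where "t = real i / (2 * real r + 2)"
  have t0: "0 \<le> t" and t1: "t < 1" and tI: "t \<le> real i" using I by (auto simp: t_def field_simps)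
  have d: "avg_degree (G_ir i r) = 2 * real r + 2 + t"
    unfolding avg t_def by (simp add: field_simps power2_eq_square)
  have "lap_energy (G_ir i r) = (\<Sum>S<4. \<bar>lamG r i S - (2 * real r + 2 + t)\<bar> + (szG r i S - 1) * \<bar>[2*real r+3, 2*real r+1, 2*real r+2+real i, 2*real r+2] ! S - (2 * real r + 2 + t)\<bar>)"
    unfolding energy_sum d by (rule sum.cong) (simp_all add: szeq ee)
  also have "\<dots> = 8 * real r + 6"
    using t0 t1 tI I by (simp add: sum4 lamG_def szG_def algebra_simps abs_if)
  finally show "lap_energy (G_ir i r) = 8 * real r + 6" .
  have "real (count (lap_spectrum (G_ir i r)) (2 * real r + 2)) = (\<Sum>S<4. (if lamG r i S = 2 * real r + 2 then 1 else 0) + (szG r i S - 1) * (if [2*real r+3, 2*real r+1, 2*real r+2+real i, 2*real r+2] ! S = 2 * real r + 2 then 1 else 0))"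
    unfolding count_spec by (rule sum.cong) (simp_all add: szeq ee)
  also have "\<dots> = real i" by (simp add: sum4 lamG_def szG_def)
  finally show "real (count (lap_spectrum (G_ir i r)) (2 * real r + 2)) = real i" .
  have "real (count (lap_spectrum (G_ir i r)) (4 * real r + 4)) = (\<Sum>S<4. (if lamG r i S = 4 * real r + 4 then 1 else 0) + (szG r i S - 1) * (if [2*real r+3, 2*real r+1, 2*real r+2+real i, 2*real r+2] ! S = 4 * real r + 4 then 1 else 0))"
    unfolding count_spec by (rule sum.cong) (simp_all add: szeq ee)
  also have "\<dots> = 1" using I by (simp add: sum4 lamG_def szG_def)
  finally show "real (count (lap_spectrum (G_ir i r)) (4 * real r + 4)) = 1" .
qed

theorem theorem6:
  fixes r :: nat
  assumes "r \<ge> 1"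
  shows "(\<forall>i \<le> 2*r. order (G_ir i r) = 4*r+4
            \<and> lap_energy (G_ir i r) = lap_energy (complete_graph (4*r+4))
            \<and> lap_energy (complete_graph (4*r+4)) = 8*real r+6
            \<and> L_borderenergetic (G_ir i r))
       \<and> (\<forall>i \<le> 2*r. \<forall>j \<le> 2*r. i \<noteq> j \<longrightarrow> lap_spectrum (G_ir i r) \<noteq> lap_spectrum (G_ir j r))
       \<and> (\<forall>i \<le> 2*r. lap_spectrum (G_ir i r) \<noteq> lap_spectrum (complete_graph (4*r+4)))"
proof (intro conjI allI impI)
  have K: "lap_energy (complete_graph (4*r+4)) = 8*real r+6"
    using K_facts(1)[of "4*r+4"] by simp
  have Kc: "real (count (lap_spectrum (complete_graph (4*r+4))) (4 * real r + 4)) = 4 * real r + 3"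
    using K_facts(2)[of "4*r+4"] by simp
  fix i assume i: "i \<le> 2*r"
  show "order (G_ir i r) = 4*r+4" by (rule order_G[OF i])
  show "lap_energy (G_ir i r) = lap_energy (complete_graph (4*r+4))" using G_facts(1)[OF i] K by simp
  show "lap_energy (complete_graph (4*r+4)) = 8*real r+6" by (rule K)
  show "L_borderenergetic (G_ir i r)" unfolding L_borderenergetic_def order_G[OF i]
    using G_facts(1)[OF i] K by simp
  show "lap_spectrum (G_ir i r) \<noteq> lap_spectrum (complete_graph (4*r+4))"
  proof
    assume "lap_spectrum (G_ir i r) = lap_spectrum (complete_graph (4*r+4))"
    then show False using G_facts(3)[OF i] Kc by simp
  qed
next
  fix i j assume i: "i \<le> 2*r" and j: "j \<le> 2*r" and ij: "i \<noteq> j"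
  show "lap_spectrum (G_ir i r) \<noteq> lap_spectrum (G_ir j r)"
  proof
    assume "lap_spectrum (G_ir i r) = lap_spectrum (G_ir j r)"
    then have "real i = real j" using G_facts(2)[OF i] G_facts(2)[OF j] by metis
    then show False using ij by simp
  qed
qed

end
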